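(* Let $P,Q$ be partial semigroups and $f:P\to Q$ a partial homomorphism. If $Q$ is IP-regular and the subset $f^{-1}[E(Q)]$ of $P$ is IP-regular, then $P$ is IP-regular.
   Context: A partial semigroup is a set with a partially defined multiplication such that $(ab)c=a(bc)$ whenever both sides are defined; any subset inherits a partial semigroup structure by restricting the operation. $E(P)$ is the set of idempotents ($aa$ defined and equal to $a$). A partial homomorphism $f:P\to Q$ is a map such that whenever $ab$ is defined in $P$, $f(a)f(b)$ is defined in $Q$ and $f(ab)=f(a)f(b)$. For a sequence $\vec{x}$ all of whose finite ordered products $\prod_{i\in a}x_i$ ($a$ finite nonempty subset of $\omega$, increasing order) are defined, $\mathrm{FP}(\vec{x})$ is the set of these products and $\mathrm{FP}_1(\vec{x})=\mathrm{FP}((x_{n+1})_n)$; an IP-set is a set containing such an $\mathrm{FP}(\vec{x})$. $P$ is strongly IP-regular if for every such sequence $\vec{x}$ in $P$, $x_0\mathrm{FP}_1(\vec{x})$ is not an IP-set; $P$ is IP-regular if $P\setminus E(P)$ is a union of finitely many strongly IP-regular subsets. *)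

theory Defs
  imports Main
begin

text \<open>A partial semigroup is a carrier set S together with a partial operation
  m :: 'a => 'a => 'a option (None = undefined). Everything is relativised to S.\<close>

type_synonym 'a pop = "'a \<Rightarrow> 'a \<Rightarrow> 'a option"

definition partial_semigroup :: "'a set \<Rightarrow> 'a pop \<Rightarrow> bool" where
  "partial_semigroup S m \<longleftrightarrow>
     (\<forall>a\<in>S. \<forall>b\<in>S. \<forall>c. m a b = Some c \<longrightarrow> c \<in> S) \<and>
     (\<forall>a\<in>S. \<forall>b\<in>S. \<forall>c\<in>S. \<forall>ab bc x y.
        m a b = Some ab \<longrightarrow> m ab c = Some x \<longrightarrow>
        m b c = Some bc \<longrightarrow> m a bc = Some y \<longrightarrow> x = y)"

definition restr :: "'a set \<Rightarrow> 'a pop \<Rightarrow> 'a pop" where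
  "restr T m a b = (if a \<in> T \<and> b \<in> T then
      (case m a b of None \<Rightarrow> None | Some c \<Rightarrow> if c \<in> T then Some c else None)
    else None)"

definition idems :: "'a set \<Rightarrow> 'a pop \<Rightarrow> 'a set" where
  "idems S m = {a \<in> S. m a a = Some a}"

definition partial_hom :: "'a set \<Rightarrow> 'a pop \<Rightarrow> 'b set \<Rightarrow> 'b pop \<Rightarrow> ('a \<Rightarrow> 'b) \<Rightarrow> bool" where
  "partial_hom P mP Q mQ f \<longleftrightarrow> f ` P \<subseteq> Q \<and>
     (\<forall>a\<in>P. \<forall>b\<in>P. \<forall>c. mP a b = Some c \<longrightarrow> mQ (f a) (f b) = Some (f c))"

fun lprod :: "'a pop \<Rightarrow> 'a list \<Rightarrow> 'a option" where
  "lprod m [] = None"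
| "lprod m (a # as) = foldl (\<lambda>acc b. Option.bind acc (\<lambda>c. m c b)) (Some a) as"

definition seqprod :: "'a pop \<Rightarrow> (nat \<Rightarrow> 'a) \<Rightarrow> nat set \<Rightarrow> 'a option" where
  "seqprod m x A = lprod m (map x (sorted_list_of_set A))"

definition FP_defined :: "'a pop \<Rightarrow> (nat \<Rightarrow> 'a) \<Rightarrow> bool" where
  "FP_defined m x \<longleftrightarrow> (\<forall>A. finite A \<and> A \<noteq> {} \<longrightarrow> seqprod m x A \<noteq> None)"

definition FP :: "'a pop \<Rightarrow> (nat \<Rightarrow> 'a) \<Rightarrow> 'a set" where
  "FP m x = {y. \<exists>A. finite A \<and> A \<noteq> {} \<and> seqprod m x A = Some y}"

definition FP1 :: "'a pop \<Rightarrow> (nat \<Rightarrow> 'a) \<Rightarrow> 'a set" where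
  "FP1 m x = FP m (\<lambda>n. x (Suc n))"

definition IP_set :: "'a set \<Rightarrow> 'a pop \<Rightarrow> 'a set \<Rightarrow> bool" where
  "IP_set S m B \<longleftrightarrow> (\<exists>x. range x \<subseteq> S \<and> FP_defined m x \<and> FP m x \<subseteq> B)"

definition lmult_set :: "'a pop \<Rightarrow> 'a \<Rightarrow> 'a set \<Rightarrow> 'a set" where
  "lmult_set m a B = {z. \<exists>y\<in>B. m a y = Some z}"

definition strongly_IP_regular :: "'a set \<Rightarrow> 'a pop \<Rightarrow> bool" where
  "strongly_IP_regular S m \<longleftrightarrow>
     (\<forall>x. range x \<subseteq> S \<longrightarrow> FP_defined m x \<longrightarrow>
        \<not> IP_set S m (lmult_set m (x 0) (FP1 m x)))"

definition IP_regular :: "'a set \<Rightarrow> 'a pop \<Rightarrow> bool" where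
  "IP_regular S m \<longleftrightarrow>
     (\<exists>F. finite F \<and> \<Union>F = S - idems S m \<and>
        (\<forall>T\<in>F. T \<subseteq> S \<and> strongly_IP_regular T (restr T m)))"

end

theory Submission
  imports Defs
begin

lemma foldl_None_aux: "foldl (\<lambda>acc b. Option.bind acc (\<lambda>c. m c b)) None xs = None"
  by (induction xs) auto

lemma foldl_hom_aux:
  assumes h: "\<And>a b c. m1 a b = Some c \<Longrightarrow> m2 (g a) (g b) = Some (g c)"
  shows "foldl (\<lambda>acc b. Option.bind acc (\<lambda>c. m1 c b)) acc xs = Some c \<Longrightarrow>
         foldl (\<lambda>acc b. Option.bind acc (\<lambda>c. m2 c b)) (map_option g acc) (map g xs) = Some (g c)"
proof (induction xs arbitrary: acc)
  case Nil then show ?case by auto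
next
  case (Cons x xs)
  show ?case
  proof (cases acc)
    case None then show ?thesis using Cons.prems by (simp add: foldl_None_aux)
  next
    case (Some a)
    show ?thesis
    proof (cases "m1 a x")
      case None then show ?thesis using Cons.prems Some by (simp add: foldl_None_aux)
    next
      case (Some d)
      then have m2: "m2 (g a) (g x) = Some (g d)" using h by blast
      have "foldl (\<lambda>acc b. Option.bind acc (\<lambda>c. m1 c b)) (Some d) xs = Some c"
        using Cons.prems \<open>acc = Some a\<close> \<open>m1 a x = Some d\<close> by simp
      then have "foldl (\<lambda>acc b. Option.bind acc (\<lambda>c. m2 c b)) (Some (g d)) (map g xs) = Some (g c)"
        using Cons.IH[of "Some d"] by simp
      then show ?thesis using \<open>acc = Some a\<close> m2 by simp
    qed
  qed
qed

lemma seqprod_hom: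
  assumes h: "\<And>a b c. m1 a b = Some c \<Longrightarrow> m2 (g a) (g b) = Some (g c)"
    and "seqprod m1 x A = Some c"
  shows "seqprod m2 (g \<circ> x) A = Some (g c)"
proof -
  have "lprod m1 (map x (sorted_list_of_set A)) = Some c" using assms(2) by (simp add: seqprod_def)
  moreover have "\<And>ys c. lprod m1 ys = Some c \<Longrightarrow> lprod m2 (map g ys) = Some (g c)"
  proof -
    fix ys c assume "lprod m1 ys = Some c"
    then show "lprod m2 (map g ys) = Some (g c)"
      using foldl_hom_aux[of m1 m2 g "Some (hd ys)" "tl ys", OF h]
      by (cases ys) auto
  qed
  ultimately have "lprod m2 (map g (map x (sorted_list_of_set A))) = Some (g c)" by blast
  then show ?thesis by (simp add: seqprod_def)
qed

lemma strongly_transfer: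
  assumes h: "\<And>a b c. m1 a b = Some c \<Longrightarrow> m2 (g a) (g b) = Some (g c)"
    and gT: "g ` S \<subseteq> T"
    and sT: "strongly_IP_regular T m2"
  shows "strongly_IP_regular S m1"
  unfolding strongly_IP_regular_def
proof (intro allI impI notI)
  fix x assume xS: "range x \<subseteq> S" and xd: "FP_defined m1 x"
    and ip: "IP_set S m1 (lmult_set m1 (x 0) (FP1 m1 x))"
  have FPd: "FP_defined m2 (g \<circ> z)" if "FP_defined m1 z" for z
    unfolding FP_defined_def
  proof (intro allI impI)
    fix A :: "nat set" assume A: "finite A \<and> A \<noteq> {}"
    have "seqprod m1 z A \<noteq> None" using that A unfolding FP_defined_def by blast
    then obtain c where "seqprod m1 z A = Some c" by auto
    then show "seqprod m2 (g \<circ> z) A \<noteq> None" using seqprod_hom[of m1 m2 g, OF h] by auto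
  qed
  have FPs: "FP m2 (g \<circ> z) \<subseteq> g ` FP m1 z" if "FP_defined m1 z" for z
  proof
    fix w assume "w \<in> FP m2 (g \<circ> z)"
    then obtain A where A: "finite A" "A \<noteq> {}" "seqprod m2 (g \<circ> z) A = Some w"
      unfolding FP_def by blast
    have "seqprod m1 z A \<noteq> None" using that A(1,2) unfolding FP_defined_def by blast
    then obtain c where c: "seqprod m1 z A = Some c" by auto
    then have "w = g c" using seqprod_hom[of m1 m2 g, OF h c] A by simp
    moreover have "c \<in> FP m1 z" using A c unfolding FP_def by blast
    ultimately show "w \<in> g ` FP m1 z" by blast
  qed
  have FPs2: "g ` FP m1 z \<subseteq> FP m2 (g \<circ> z)" for z
  proof
    fix w assume "w \<in> g ` FP m1 z"
    then obtain c and A :: "nat set" where "w = g c" "finite A" "A \<noteq> {}" "seqprod m1 z A = Some c"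
      unfolding FP_def by blast
    then show "w \<in> FP m2 (g \<circ> z)" using seqprod_hom[of m1 m2 g, OF h] unfolding FP_def by blast
  qed
  obtain y where y: "range y \<subseteq> S" "FP_defined m1 y" "FP m1 y \<subseteq> lmult_set m1 (x 0) (FP1 m1 x)"
    using ip unfolding IP_set_def by blast
  have "FP m2 (g \<circ> y) \<subseteq> lmult_set m2 ((g \<circ> x) 0) (FP1 m2 (g \<circ> x))"
  proof
    fix w assume "w \<in> FP m2 (g \<circ> y)"
    then obtain c where c: "w = g c" "c \<in> FP m1 y" using FPs[OF y(2)] by blast
    then obtain u where u: "u \<in> FP1 m1 x" "m1 (x 0) u = Some c"
      using y(3) unfolding lmult_set_def by blast
    have "g u \<in> FP1 m2 (g \<circ> x)" using u(1) FPs2[of "\<lambda>n. x (Suc n)"]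
      unfolding FP1_def by (auto simp: comp_def)
    moreover have "m2 (g (x 0)) (g u) = Some w" using h[OF u(2)] c by simp
    ultimately show "w \<in> lmult_set m2 ((g \<circ> x) 0) (FP1 m2 (g \<circ> x))"
      unfolding lmult_set_def by auto
  qed
  moreover have "range (g \<circ> y) \<subseteq> T" using y(1) gT by auto
  moreover have "range (g \<circ> x) \<subseteq> T" using xS gT by auto
  ultimately show False using sT FPd[OF y(2)] FPd[OF xd]
    unfolding strongly_IP_regular_def IP_set_def by blast
qed

lemma restr_restr: "U \<subseteq> E \<Longrightarrow> restr U (restr E m) = restr U m"
  by (rule ext)+ (auto simp: restr_def split: option.splits)

theorem mainTheorem5:
  fixes P :: "'a set" and mP :: "'a pop" and Q :: "'b set" and mQ :: "'b pop"
    and f :: "'a \<Rightarrow> 'b"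
  assumes "partial_semigroup P mP" and "partial_semigroup Q mQ"
    and "partial_hom P mP Q mQ f"
    and "IP_regular Q mQ"
    and "IP_regular (P \<inter> f -` idems Q mQ) (restr (P \<inter> f -` idems Q mQ) mP)"
  shows "IP_regular P mP"
proof -
  define E where "E = P \<inter> f -` idems Q mQ"
  obtain FQ where FQ: "finite FQ" "\<Union>FQ = Q - idems Q mQ"
    "\<forall>T\<in>FQ. T \<subseteq> Q \<and> strongly_IP_regular T (restr T mQ)"
    using assms(4) unfolding IP_regular_def by blast
  obtain FE where FE: "finite FE" "\<Union>FE = E - idems E (restr E mP)"
    "\<forall>T\<in>FE. T \<subseteq> E \<and> strongly_IP_regular T (restr T (restr E mP))"
    using assms(5) unfolding IP_regular_def E_def by blast
  have hom: "f ` P \<subseteq> Q" "\<And>a b c. a \<in> P \<Longrightarrow> b \<in> P \<Longrightarrow> mP a b = Some c \<Longrightarrow> mQ (f a) (f b) = Some (f c)"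
    using assms(3) unfolding partial_hom_def by auto
  have idE: "idems E (restr E mP) = E \<inter> idems P mP"
  proof (intro set_eqI iffI)
    fix a assume "a \<in> idems E (restr E mP)"
    then have "a \<in> E" "restr E mP a a = Some a" unfolding idems_def by auto
    then show "a \<in> E \<inter> idems P mP"
    proof -
      assume h1: "a \<in> E" "restr E mP a a = Some a"
      then have "mP a a = Some a" by (auto simp: restr_def split: option.splits if_splits)
      moreover have "a \<in> P" using h1 unfolding E_def by blast
      ultimately show ?thesis using h1 unfolding idems_def by blast
    qed
  next
    fix a assume "a \<in> E \<inter> idems P mP"
    then have "a \<in> E" "mP a a = Some a" unfolding idems_def by blast+
    then show "a \<in> idems E (restr E mP)"
      unfolding restr_def idems_def by simp
  qed
  have idP: "idems P mP \<subseteq> E"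
  proof
    fix a assume "a \<in> idems P mP"
    then have a: "a \<in> P" "mP a a = Some a" unfolding idems_def by auto
    then have "mQ (f a) (f a) = Some (f a)" using hom(2) by blast
    moreover have "f a \<in> Q" using a hom(1) by blast
    ultimately have "f a \<in> idems Q mQ" unfolding idems_def by blast
    then show "a \<in> E" using a unfolding E_def by blast
  qed
  define F where "F = (\<lambda>T. P \<inter> f -` T) ` FQ \<union> FE"
  show ?thesis
    unfolding IP_regular_def
  proof (intro exI conjI ballI)
    show "finite F" using FQ FE unfolding F_def by auto
    show "\<Union>F = P - idems P mP"
    proof
      show "\<Union>F \<subseteq> P - idems P mP"
      proof
        fix a assume "a \<in> \<Union>F"
        then consider (q) U where "U \<in> FQ" "a \<in> P" "f a \<in> U" | (e) U where "U \<in> FE" "a \<in> U"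
          unfolding F_def by blast
        then show "a \<in> P - idems P mP"
        proof cases
          case q
          then have "f a \<notin> idems Q mQ" using FQ(2) by blast
          then have "a \<notin> E" unfolding E_def by blast
          then show ?thesis using q idP by blast
        next
          case e
          then have "a \<in> E - idems E (restr E mP)" using FE(2) by blast
          then show ?thesis using idE unfolding E_def by blast
        qed
      qed
      show "P - idems P mP \<subseteq> \<Union>F"
      proof
        fix a assume a: "a \<in> P - idems P mP"
        show "a \<in> \<Union>F"
        proof (cases "a \<in> E")
          case True then show ?thesis using a FE(2) idE unfolding F_def by blast
        next
          case False
          then have "f a \<in> Q - idems Q mQ" using a hom unfolding E_def by auto
          then show ?thesis using a FQ(2) unfolding F_def by blast
        qed
      qed
    qed
    fix T assume T: "T \<in> F"
    show "T \<subseteq> P" using T FE(3) unfolding F_def E_def by auto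
    show "strongly_IP_regular T (restr T mP)"
    proof (cases "T \<in> FE")
      case True then show ?thesis using FE(3) restr_restr by metis
    next
      case False
      then obtain U where U: "U \<in> FQ" "T = P \<inter> f -` U" using T unfolding F_def by blast
      show ?thesis
      proof (rule strongly_transfer[of "restr T mP" "restr U mQ" f T U])
        fix a b c assume "restr T mP a b = Some c"
        then show "restr U mQ (f a) (f b) = Some (f c)"
          using hom(2) U unfolding restr_def by (auto split: if_splits option.splits)
      next
        show "f ` T \<subseteq> U" using U by auto
        show "strongly_IP_regular U (restr U mQ)" using FQ(3) U by blast
      qed
    qed
  qed
qed

end
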